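(* Let $(G,Y)$ be a finite $C$-group and let $s=s'\cdot s''\in S(G,Y)^G$ with $\tau_i(s)\ge 2n_ip_i+1$ and $\tau_i(s'')=0$ for some index $i$. Then $s$ can be written in the form $s=s_{\Gamma_i}\cdot s_i\cdot s''$ where $s_i\cdot s''\in S(G,Y)^G$ and $s_{\Gamma_i}=\prod_{j=1}^{n_i}x_{y_{i,j}}^{p_i}$.
   Context: A finite $C$-group is a pair $(G,Y)$ with $Y$ a finite conjugation-invariant subset of the group $G$, $1\notin Y$, such that $G$ has a presentation with generators the elements of $Y$ and defining relations all of the form $z^{-1}yz=y'$ ($y,y',z\in Y$). $Y=C_1\sqcup\dots\sqcup C_m$ is the decomposition into conjugacy classes of $G$, enumerated $C_i=\{y_{i,1},\dots,y_{i,n_i}\}$; $p_i$ is the least $p\ge1$ with $y^p$ central in $G$ for $y\in C_i$. The factorization semigroup $S(G,Y)$ is generated by symbols $x_y$, $y\in Y$, subject to $x_{g_1}x_{g_2}=x_{g_2}x_{g_2^{-1}g_1g_2}=x_{g_1g_2g_1^{-1}}x_{g_1}$ ($g_1,g_2\in Y$). For $s=x_{g_1}\cdots x_{g_n}$, $G_s$ is the subgroup generated by $g_1,\dots,g_n$ (well defined), $S(G,Y)^G=\{s:G_s=G\}$, and $\tau_i(s)$ is the number of factors of $s$ from $\{x_y:y\in C_i\}$. *)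

theory Defs
  imports "HOL-Algebra.Algebra"
begin

fun letter_eval :: "('g, 'b) monoid_scheme \<Rightarrow> 'g \<times> bool \<Rightarrow> 'g" where
  "letter_eval G (y, False) = y"
| "letter_eval G (y, True) = inv\<^bsub>G\<^esub> y"

definition word_eval :: "('g, 'b) monoid_scheme \<Rightarrow> ('g \<times> bool) list \<Rightarrow> 'g" where
  "word_eval G w = foldr (\<lambda>l acc. letter_eval G l \<otimes>\<^bsub>G\<^esub> acc) w \<one>\<^bsub>G\<^esub>"

(* one-step relation of the group presented by generators Y and relators R, where a triple
   (y, y', z) \<in> R encodes the defining relation z^{-1} y z = y', i.e. the relator z^{-1} y z y'^{-1} *)
inductive pres_step :: "'g set \<Rightarrow> ('g \<times> 'g \<times> 'g) set \<Rightarrow> ('g \<times> bool) list \<Rightarrow> ('g \<times> bool) list \<Rightarrow> bool"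
  for Y R where
  free_red: "a \<in> Y \<Longrightarrow> pres_step Y R (u @ [(a, b), (a, \<not> b)] @ v) (u @ v)"
| relator: "(y, y', z) \<in> R \<Longrightarrow>
    pres_step Y R (u @ [(z, True), (y, False), (z, False), (y', True)] @ v) (u @ v)"

definition pres_eq :: "'g set \<Rightarrow> ('g \<times> 'g \<times> 'g) set \<Rightarrow> ('g \<times> bool) list \<Rightarrow> ('g \<times> bool) list \<Rightarrow> bool" where
  "pres_eq Y R = equivclp (pres_step Y R)"

definition finite_C_group :: "('g, 'b) monoid_scheme \<Rightarrow> 'g set \<Rightarrow> bool" where
  "finite_C_group G Y \<longleftrightarrow>
     group G \<and> Y \<subseteq> carrier G \<and> finite Y \<and> \<one>\<^bsub>G\<^esub> \<notin> Y \<and>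
     (\<forall>g \<in> carrier G. \<forall>y \<in> Y. g \<otimes>\<^bsub>G\<^esub> y \<otimes>\<^bsub>G\<^esub> inv\<^bsub>G\<^esub> g \<in> Y) \<and>
     (\<exists>R. R \<subseteq> Y \<times> Y \<times> Y \<and>
        (\<forall>(y, y', z) \<in> R. inv\<^bsub>G\<^esub> z \<otimes>\<^bsub>G\<^esub> y \<otimes>\<^bsub>G\<^esub> z = y') \<and>
        (\<forall>g \<in> carrier G. \<exists>w. set w \<subseteq> Y \<times> UNIV \<and> word_eval G w = g) \<and>
        (\<forall>w1 w2. set w1 \<subseteq> Y \<times> UNIV \<longrightarrow> set w2 \<subseteq> Y \<times> UNIV \<longrightarrow>
            (word_eval G w1 = word_eval G w2 \<longleftrightarrow> pres_eq Y R w1 w2)))"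

definition conj_class :: "('g, 'b) monoid_scheme \<Rightarrow> 'g \<Rightarrow> 'g set" where
  "conj_class G y = {g \<otimes>\<^bsub>G\<^esub> y \<otimes>\<^bsub>G\<^esub> inv\<^bsub>G\<^esub> g | g. g \<in> carrier G}"

definition central :: "('g, 'b) monoid_scheme \<Rightarrow> 'g \<Rightarrow> bool" where
  "central G a \<longleftrightarrow> (\<forall>g \<in> carrier G. a \<otimes>\<^bsub>G\<^esub> g = g \<otimes>\<^bsub>G\<^esub> a)"

definition class_period :: "('g, 'b) monoid_scheme \<Rightarrow> 'g set \<Rightarrow> nat" where
  "class_period G C = (LEAST p. p \<ge> 1 \<and> (\<forall>y \<in> C. central G (y [^]\<^bsub>G\<^esub> p)))"

(* Factorization semigroup S(G,Y): an element x_{g_1}...x_{g_n} is represented by the word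
   [g_1, ..., g_n]; equality in S(G,Y) is the congruence generated by the defining relations
   x_{g1} x_{g2} = x_{g2} x_{g2^{-1} g1 g2} = x_{g1 g2 g1^{-1}} x_{g1}. *)
inductive fact_step :: "('g, 'b) monoid_scheme \<Rightarrow> 'g set \<Rightarrow> 'g list \<Rightarrow> 'g list \<Rightarrow> bool"
  for G Y where
  rel1: "g1 \<in> Y \<Longrightarrow> g2 \<in> Y \<Longrightarrow>
    fact_step G Y (u @ [g1, g2] @ v) (u @ [g2, inv\<^bsub>G\<^esub> g2 \<otimes>\<^bsub>G\<^esub> g1 \<otimes>\<^bsub>G\<^esub> g2] @ v)"
| rel2: "g1 \<in> Y \<Longrightarrow> g2 \<in> Y \<Longrightarrow>
    fact_step G Y (u @ [g1, g2] @ v) (u @ [g1 \<otimes>\<^bsub>G\<^esub> g2 \<otimes>\<^bsub>G\<^esub> inv\<^bsub>G\<^esub> g1, g1] @ v)"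

definition fact_eq :: "('g, 'b) monoid_scheme \<Rightarrow> 'g set \<Rightarrow> 'g list \<Rightarrow> 'g list \<Rightarrow> bool" where
  "fact_eq G Y = equivclp (fact_step G Y)"

(* s \<in> S(G,Y)^G : the factors generate G *)
definition full_fact :: "('g, 'b) monoid_scheme \<Rightarrow> 'g list \<Rightarrow> bool" where
  "full_fact G s \<longleftrightarrow> generate G (set s) = carrier G"

definition tau :: "'g set \<Rightarrow> 'g list \<Rightarrow> nat" where
  "tau C s = length (filter (\<lambda>y. y \<in> C) s)"

end

theory Submission imports Defs begin

lemma fact_step_app: "fact_step G Y a b \<Longrightarrow> fact_step G Y (u@a@v) (u@b@v)"
proof (induct rule: fact_step.induct)
  case (rel1 g1 g2 u' v')
  then show ?case using fact_step.rel1[of g1 Y g2 G "u@u'" "v'@v"] by simp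
next
  case (rel2 g1 g2 u' v')
  then show ?case using fact_step.rel2[of g1 Y g2 G "u@u'" "v'@v"] by simp
qed

lemma fact_eq_app: "fact_eq G Y a b \<Longrightarrow> fact_eq G Y (u@a@v) (u@b@v)"
  unfolding fact_eq_def
  by (induct rule: equivclp_induct) (auto intro: equivclp_into_equivclp fact_step_app)

lemma fact_eq_trans: "fact_eq G Y a b \<Longrightarrow> fact_eq G Y b c \<Longrightarrow> fact_eq G Y a c"
  unfolding fact_eq_def by (rule equivclp_trans)

lemma fact_eq_sym: "fact_eq G Y a b \<Longrightarrow> fact_eq G Y b a"
  unfolding fact_eq_def by (rule equivclp_sym)

lemma fact_eq_refl: "fact_eq G Y a a"
  unfolding fact_eq_def by simp

lemma fact_eq_step: "fact_step G Y a b \<Longrightarrow> fact_eq G Y a b"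
  unfolding fact_eq_def by blast

context group begin
lemma inv_cancel1 [simp]: "x \<in> carrier G \<Longrightarrow> y \<in> carrier G \<Longrightarrow> inv x \<otimes> (x \<otimes> y) = y"
  by (simp add: m_assoc[symmetric])
lemma inv_cancel2 [simp]: "x \<in> carrier G \<Longrightarrow> y \<in> carrier G \<Longrightarrow> x \<otimes> (inv x \<otimes> y) = y"
  by (simp add: m_assoc[symmetric])
lemmas gs = m_assoc inv_mult_group
lemma conj_cc: "g \<in> carrier G \<Longrightarrow> h \<in> carrier G \<Longrightarrow> y0 \<in> carrier G \<Longrightarrow>
   (h \<otimes> g \<otimes> inv h \<in> conj_class G y0) = (g \<in> conj_class G y0)"
proof
  assume a: "g \<in> carrier G" "h \<in> carrier G" "y0 \<in> carrier G"
  assume "h \<otimes> g \<otimes> inv h \<in> conj_class G y0"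
  then obtain k where k: "k \<in> carrier G" "h \<otimes> g \<otimes> inv h = k \<otimes> y0 \<otimes> inv k" unfolding conj_class_def by auto
  have "g = inv h \<otimes> (h \<otimes> g \<otimes> inv h) \<otimes> h" using a by (simp add: gs)
  also have "\<dots> = (inv h \<otimes> k) \<otimes> y0 \<otimes> inv (inv h \<otimes> k)" using a k by (simp add: gs)
  finally show "g \<in> conj_class G y0" unfolding conj_class_def using a k by auto
next
  assume a: "g \<in> carrier G" "h \<in> carrier G" "y0 \<in> carrier G"
  assume "g \<in> conj_class G y0"
  then obtain k where k: "k \<in> carrier G" "g = k \<otimes> y0 \<otimes> inv k" unfolding conj_class_def by auto
  have "h \<otimes> g \<otimes> inv h = (h \<otimes> k) \<otimes> y0 \<otimes> inv (h \<otimes> k)" using a k by (simp add: gs)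
  then show "h \<otimes> g \<otimes> inv h \<in> conj_class G y0" unfolding conj_class_def using a k by auto
qed
lemma conj_cc': "g \<in> carrier G \<Longrightarrow> h \<in> carrier G \<Longrightarrow> y0 \<in> carrier G \<Longrightarrow>
   (inv h \<otimes> g \<otimes> h \<in> conj_class G y0) = (g \<in> conj_class G y0)"
  using conj_cc[of g "inv h" y0] by simp

lemma gen_eq: "A \<subseteq> carrier G \<Longrightarrow> B \<subseteq> carrier G \<Longrightarrow> A \<subseteq> generate G B \<Longrightarrow> B \<subseteq> generate G A
  \<Longrightarrow> generate G A = generate G B"
  by (meson generate_is_subgroup generate_subgroup_incl subset_antisym)

lemma comm_inv: "x \<in> carrier G \<Longrightarrow> z \<in> carrier G \<Longrightarrow> x \<otimes> z = z \<otimes> x \<Longrightarrow> x \<otimes> inv z = inv z \<otimes> x"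
proof -
  assume a: "x \<in> carrier G" "z \<in> carrier G" "x \<otimes> z = z \<otimes> x"
  have "inv z \<otimes> x = inv z \<otimes> (x \<otimes> z) \<otimes> inv z" using a(1,2) by (simp add: gs)
  also have "\<dots> = inv z \<otimes> (z \<otimes> x) \<otimes> inv z" using a(3) by simp
  also have "\<dots> = x \<otimes> inv z" using a(1,2) by (simp add: gs)
  finally show ?thesis by simp
qed

lemma central_pow: "x \<in> carrier G \<Longrightarrow> central G x \<Longrightarrow> central G (x [^] (m::nat))"
proof (induct m)
  case 0 then show ?case by (simp add: central_def)
next
  case (Suc m)
  then show ?case unfolding central_def
    by (metis m_assoc nat_pow_Suc nat_pow_closed)
qed

lemma central_conj: "x \<in> carrier G \<Longrightarrow> g \<in> carrier G \<Longrightarrow> central G x \<Longrightarrow> x \<otimes> g \<otimes> inv x = g"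
  unfolding central_def by (simp add: gs)
end



locale cg0 = group +
  fixes Y :: "'a set"
  assumes Ysub: "Y \<subseteq> carrier G" and finY: "finite Y"
    and conjY: "\<And>g y. g \<in> carrier G \<Longrightarrow> y \<in> Y \<Longrightarrow> g \<otimes> y \<otimes> inv g \<in> Y"
    and genw: "\<forall>g \<in> carrier G. \<exists>w. set w \<subseteq> Y \<times> UNIV \<and> word_eval G w = g"
begin

lemma YC: "y \<in> Y \<Longrightarrow> y \<in> carrier G" using Ysub by auto

lemma conjY': "g \<in> carrier G \<Longrightarrow> y \<in> Y \<Longrightarrow> inv g \<otimes> y \<otimes> g \<in> Y"
  using conjY[of "inv g" y] by simp

lemma word_eval_cons: "word_eval G (l # w) = letter_eval G l \<otimes> word_eval G w"
  by (simp add: word_eval_def)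

lemma word_comm: "x \<in> carrier G \<Longrightarrow> (\<forall>z\<in>Y. x \<otimes> z = z \<otimes> x) \<Longrightarrow> set w \<subseteq> Y \<times> UNIV \<Longrightarrow>
   word_eval G w \<in> carrier G \<and> x \<otimes> word_eval G w = word_eval G w \<otimes> x"
proof (induct w)
  case Nil then show ?case by (simp add: word_eval_def)
next
  case (Cons l w)
  obtain z b where l: "l = (z, b)" by force
  have z: "z \<in> Y" using Cons l by auto
  have lc: "letter_eval G l \<in> carrier G \<and> x \<otimes> letter_eval G l = letter_eval G l \<otimes> x"
    using Cons z YC[OF z] comm_inv[of x z] l by (cases b) auto
  have ih: "word_eval G w \<in> carrier G \<and> x \<otimes> word_eval G w = word_eval G w \<otimes> x" using Cons by auto
  let ?a = "letter_eval G l" and ?b = "word_eval G w"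
  have c: "?a \<in> carrier G" "?b \<in> carrier G" "x \<in> carrier G" using lc ih Cons(2) by auto
  have "x \<otimes> (?a \<otimes> ?b) = (x \<otimes> ?a) \<otimes> ?b" using c by (simp add: m_assoc)
  also have "\<dots> = (?a \<otimes> x) \<otimes> ?b" using lc by simp
  also have "\<dots> = ?a \<otimes> (x \<otimes> ?b)" using c by (simp add: m_assoc)
  also have "\<dots> = ?a \<otimes> (?b \<otimes> x)" using ih by simp
  also have "\<dots> = (?a \<otimes> ?b) \<otimes> x" using c by (simp add: m_assoc)
  finally show ?case unfolding word_eval_cons using lc ih by simp
qed

lemma comm_Y_central: "x \<in> carrier G \<Longrightarrow> (\<forall>z\<in>Y. x \<otimes> z = z \<otimes> x) \<Longrightarrow> central G x"
  unfolding central_def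
proof (intro ballI)
  fix g assume a: "x \<in> carrier G" "\<forall>z\<in>Y. x \<otimes> z = z \<otimes> x" "g \<in> carrier G"
  then obtain w where "set w \<subseteq> Y \<times> UNIV" "word_eval G w = g" using genw by blast
  then show "x \<otimes> g = g \<otimes> x" using word_comm[OF a(1,2)] by blast
qed

lemma period_elem: "y \<in> Y \<Longrightarrow> \<exists>d::nat\<ge>1. central G (y [^] d)"
proof -
  assume yY: "y \<in> Y"
  have yc: "y \<in> carrier G" using YC[OF yY] .
  define f where "f = (\<lambda>k::nat. restrict (\<lambda>z. y [^] k \<otimes> z \<otimes> inv (y [^] k)) Y)"
  have "range f \<subseteq> Y \<rightarrow>\<^sub>E Y" unfolding f_def using conjY yc by auto
  moreover have "finite (Y \<rightarrow>\<^sub>E Y)" using finY by (simp add: finite_PiE)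
  ultimately have "finite (range f)" by (rule finite_subset)
  hence "\<not> inj f" using finite_imageD infinite_UNIV_nat by blast
  then obtain k1 k2 where kk: "f k1 = f k2" "k1 \<noteq> k2" unfolding inj_def by blast
  have "\<exists>k1 k2. k1 < k2 \<and> f k1 = f k2"
  proof (cases "k1 < k2")
    case True then show ?thesis using kk by blast
  next
    case False then have "k2 < k1" using kk by simp
    then show ?thesis using kk by metis
  qed
  then obtain a b where ab: "a < b" "f a = f b" by blast
  define d where "d = b - a"
  have bd: "y [^] b = y [^] a \<otimes> y [^] d" using ab yc unfolding d_def by (simp add: nat_pow_mult)
  have "\<forall>z\<in>Y. y [^] d \<otimes> z = z \<otimes> y [^] d"
  proof
    fix z assume zY: "z \<in> Y"
    have zc: "z \<in> carrier G" using YC[OF zY] .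
    have e: "y [^] a \<otimes> z \<otimes> inv (y [^] a) = y [^] b \<otimes> z \<otimes> inv (y [^] b)"
      using fun_cong[OF ab(2), of z] zY unfolding f_def by simp
    have "z = inv (y [^] a) \<otimes> (y [^] a \<otimes> z \<otimes> inv (y [^] a)) \<otimes> y [^] a"
      using yc zc by (simp add: gs)
    also have "\<dots> = inv (y [^] a) \<otimes> (y [^] a \<otimes> y [^] d \<otimes> z \<otimes> inv (y [^] a \<otimes> y [^] d)) \<otimes> y [^] a"
      using e bd by simp
    also have "\<dots> = y [^] d \<otimes> z \<otimes> inv (y [^] d)"
      using yc zc by (simp add: gs)
    finally have "z \<otimes> y [^] d = y [^] d \<otimes> z \<otimes> inv (y [^] d) \<otimes> y [^] d" by simp
    also have "\<dots> = y [^] d \<otimes> z" using yc zc by (simp add: gs)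
    finally show "y [^] d \<otimes> z = z \<otimes> y [^] d" by simp
  qed
  hence "central G (y [^] d)" using comm_Y_central yc by simp
  moreover have "d \<ge> 1" using ab unfolding d_def by simp
  ultimately show ?thesis by blast
qed

lemma period_set: "finite C \<Longrightarrow> C \<subseteq> Y \<Longrightarrow> \<exists>p::nat\<ge>1. \<forall>y\<in>C. central G (y [^] p)"
proof -
  assume fC: "finite C" and CY: "C \<subseteq> Y"
  have "\<forall>y\<in>C. \<exists>d::nat. d \<ge> 1 \<and> central G (y [^] d)" using period_elem CY by blast
  then obtain d :: "'a \<Rightarrow> nat" where d: "\<And>y. y \<in> C \<Longrightarrow> d y \<ge> 1 \<and> central G (y [^] d y)" by metis
  define p where "p = (\<Prod>y\<in>C. d y)"
  have "0 < p" unfolding p_def by (rule prod_pos) (use d in fastforce)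
  hence "p \<ge> 1" by simp
  moreover have "\<forall>y\<in>C. central G (y [^] p)"
  proof
    fix y assume yC: "y \<in> C"
    have yc: "y \<in> carrier G" using CY yC YC by auto
    obtain m where m: "p = d y * m" using dvd_prodI[OF fC yC, of d] unfolding p_def by (auto elim: dvdE)
    have "y [^] p = (y [^] d y) [^] m" using m yc by (simp add: nat_pow_pow)
    thus "central G (y [^] p)" using central_pow[of "y [^] d y" m] d[OF yC] yc by simp
  qed
  ultimately show ?thesis by blast
qed

end



locale cg = cg0 +
  fixes y0 :: 'a and p :: nat
  assumes y0Y: "y0 \<in> Y" and p1: "p \<ge> 1"
    and pC: "\<forall>y\<in>conj_class G y0. central G (y [^] p)"
begin

abbreviation "C \<equiv> conj_class G y0"
abbreviation "feq \<equiv> fact_eq G Y"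

lemma y0c: "y0 \<in> carrier G" using y0Y YC by auto

lemma CY: "C \<subseteq> Y" unfolding conj_class_def using conjY y0Y by auto

lemma finC: "finite C" using CY finY finite_subset by auto

lemma Cc: "c \<in> C \<Longrightarrow> c \<in> carrier G" using CY YC by auto

lemma Cconj: "c \<in> C \<Longrightarrow> g \<in> carrier G \<Longrightarrow> inv g \<otimes> c \<otimes> g \<in> C"
  using conj_cc'[OF Cc _ y0c] by blast

lemma tau_app: "tau C (a @ b) = tau C a + tau C b" unfolding tau_def by simp

lemma step_inv: "fact_step G Y a b \<Longrightarrow> (set a \<subseteq> Y \<longleftrightarrow> set b \<subseteq> Y) \<and>
   (set a \<subseteq> Y \<longrightarrow> generate G (set a) = generate G (set b)) \<and> tau C a = tau C b"
proof (induct rule: fact_step.induct)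
  case (rel1 g1 g2 u v)
  have c: "g1 \<in> carrier G" "g2 \<in> carrier G" using rel1 YC by auto
  let ?g = "inv g2 \<otimes> g1 \<otimes> g2"
  have gY: "?g \<in> Y" using conjY' c rel1 by auto
  have gc: "?g \<in> carrier G" using c by simp
  have 1: "(set (u @ [g1, g2] @ v) \<subseteq> Y) = (set (u @ [g2, ?g] @ v) \<subseteq> Y)" using rel1 gY by auto
  have 2: "generate G (set (u @ [g1, g2] @ v)) = generate G (set (u @ [g2, ?g] @ v))"
    if a: "set (u @ [g1, g2] @ v) \<subseteq> Y"
  proof (rule gen_eq)
    let ?A = "set (u @ [g1, g2] @ v)" and ?B = "set (u @ [g2, ?g] @ v)"
    show "?A \<subseteq> carrier G" using a Ysub by auto
    show "?B \<subseteq> carrier G" using a gY Ysub by auto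
    have sgA: "subgroup (generate G ?A) G" using a Ysub by (intro generate_is_subgroup) auto
    have sgB: "subgroup (generate G ?B) G" using a gY Ysub by (intro generate_is_subgroup) auto
    have "g1 \<in> generate G ?B"
    proof -
      have m: "g2 \<in> generate G ?B" "?g \<in> generate G ?B" by (auto intro: generate.incl)
      have "g2 \<otimes> ?g \<otimes> inv g2 \<in> generate G ?B"
        by (rule subgroup.m_closed[OF sgB subgroup.m_closed[OF sgB m] subgroup.m_inv_closed[OF sgB m(1)]])
      moreover have "g2 \<otimes> ?g \<otimes> inv g2 = g1" using c by (simp add: gs)
      ultimately show ?thesis by simp
    qed
    then show "?A \<subseteq> generate G ?B" by (auto intro: generate.incl)
    have m: "g1 \<in> generate G ?A" "g2 \<in> generate G ?A" by (auto intro: generate.incl)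
    have "?g \<in> generate G ?A"
      by (rule subgroup.m_closed[OF sgA subgroup.m_closed[OF sgA subgroup.m_inv_closed[OF sgA m(2)] m(1)] m(2)])
    then show "?B \<subseteq> generate G ?A" by (auto intro: generate.incl)
  qed
  have 3: "tau C (u @ [g1, g2] @ v) = tau C (u @ [g2, ?g] @ v)"
    unfolding tau_def using conj_cc'[OF c(1) c(2) y0c] by simp
  show ?case using 1 2 3 by blast
next
  case (rel2 g1 g2 u v)
  have c: "g1 \<in> carrier G" "g2 \<in> carrier G" using rel2 YC by auto
  let ?g = "g1 \<otimes> g2 \<otimes> inv g1"
  have gY: "?g \<in> Y" using conjY c rel2 by auto
  have 1: "(set (u @ [g1, g2] @ v) \<subseteq> Y) = (set (u @ [?g, g1] @ v) \<subseteq> Y)" using rel2 gY by auto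
  have 2: "generate G (set (u @ [g1, g2] @ v)) = generate G (set (u @ [?g, g1] @ v))"
    if a: "set (u @ [g1, g2] @ v) \<subseteq> Y"
  proof (rule gen_eq)
    let ?A = "set (u @ [g1, g2] @ v)" and ?B = "set (u @ [?g, g1] @ v)"
    show "?A \<subseteq> carrier G" using a Ysub by auto
    show "?B \<subseteq> carrier G" using a gY Ysub by auto
    have sgA: "subgroup (generate G ?A) G" using a Ysub by (intro generate_is_subgroup) auto
    have sgB: "subgroup (generate G ?B) G" using a gY Ysub by (intro generate_is_subgroup) auto
    have "g2 \<in> generate G ?B"
    proof -
      have m: "g1 \<in> generate G ?B" "?g \<in> generate G ?B" by (auto intro: generate.incl)
      have "inv g1 \<otimes> ?g \<otimes> g1 \<in> generate G ?B"
        by (rule subgroup.m_closed[OF sgB subgroup.m_closed[OF sgB subgroup.m_inv_closed[OF sgB m(1)] m(2)] m(1)])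
      moreover have "inv g1 \<otimes> ?g \<otimes> g1 = g2" using c by (simp add: gs)
      ultimately show ?thesis by simp
    qed
    then show "?A \<subseteq> generate G ?B" by (auto intro: generate.incl)
    have m: "g1 \<in> generate G ?A" "g2 \<in> generate G ?A" by (auto intro: generate.incl)
    have "?g \<in> generate G ?A"
      by (rule subgroup.m_closed[OF sgA subgroup.m_closed[OF sgA m(1) m(2)] subgroup.m_inv_closed[OF sgA m(1)]])
    then show "?B \<subseteq> generate G ?A" by (auto intro: generate.incl)
  qed
  have 3: "tau C (u @ [g1, g2] @ v) = tau C (u @ [?g, g1] @ v)"
    unfolding tau_def using conj_cc[OF c(2) c(1) y0c] by simp
  show ?case using 1 2 3 by blast
qed

lemma feq_inv: "feq a b \<Longrightarrow> set a \<subseteq> Y \<Longrightarrow> set b \<subseteq> Y \<and>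
   generate G (set a) = generate G (set b) \<and> tau C a = tau C b"
  unfolding fact_eq_def
proof (induct rule: equivclp_induct)
  case base then show ?case by simp
next
  case (step y z)
  then show ?case using step_inv by metis
qed

end


context cg begin

lemma app1: "feq a b \<Longrightarrow> feq (u @ a @ v) (u @ b @ v)" by (rule fact_eq_app)

lemma COMM: "a \<in> Y \<Longrightarrow> g \<in> Y \<Longrightarrow>
  feq (replicate k a @ [g]) ((a [^] k \<otimes> g \<otimes> inv (a [^] k)) # replicate k a)"
proof (induct k)
  case 0 then show ?case using YC by (simp add: fact_eq_refl)
next
  case (Suc k)
  have ac: "a \<in> carrier G" "g \<in> carrier G" using Suc YC by auto
  let ?gk = "a [^] k \<otimes> g \<otimes> inv (a [^] k)"
  have gkY: "?gk \<in> Y" using conjY ac Suc by simp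
  have 1: "feq ([a] @ (replicate k a @ [g]) @ []) ([a] @ (?gk # replicate k a) @ [])"
    by (rule app1) (rule Suc(1)[OF Suc(2,3)])
  have 2: "fact_step G Y ([] @ [a, ?gk] @ replicate k a) ([] @ [a \<otimes> ?gk \<otimes> inv a, a] @ replicate k a)"
    by (rule fact_step.rel2) (use Suc gkY in auto)
  have s: "a [^] Suc k = a \<otimes> a [^] k" using ac(1) by (rule nat_pow_Suc2)
  have e: "a \<otimes> ?gk \<otimes> inv a = a [^] Suc k \<otimes> g \<otimes> inv (a [^] Suc k)"
    unfolding s using ac by (simp add: gs)
  have h1: "feq (a # replicate k a @ [g]) (a # ?gk # replicate k a)" using 1 by simp
  have h2: "feq (a # ?gk # replicate k a) ((a \<otimes> ?gk \<otimes> inv a) # a # replicate k a)" using fact_eq_step[OF 2] by simp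
  show ?case using fact_eq_trans[OF h1 h2] e by simp
qed

lemma COMMB: "a \<in> C \<Longrightarrow> g \<in> Y \<Longrightarrow> feq (replicate p a @ [g]) (g # replicate p a)"
  using COMM[of a g p] CY central_conj[of "a [^] p" g] pC Cc YC by auto

lemma COMMW: "a \<in> C \<Longrightarrow> set w \<subseteq> Y \<Longrightarrow> feq (replicate p a @ w) (w @ replicate p a)"
proof (induct w)
  case Nil then show ?case by (simp add: fact_eq_refl)
next
  case (Cons g w)
  have 1: "feq ([] @ (replicate p a @ [g]) @ w) ([] @ (g # replicate p a) @ w)"
    by (rule app1) (rule COMMB, use Cons in auto)
  have 2: "feq ([g] @ (replicate p a @ w) @ []) ([g] @ (w @ replicate p a) @ [])"
    by (rule app1) (rule Cons(1), use Cons in auto)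
  have h1: "feq (replicate p a @ g # w) (g # replicate p a @ w)" using 1 by simp
  have h2: "feq (g # replicate p a @ w) (g # w @ replicate p a)" using 2 by simp
  show ?case using fact_eq_trans[OF h1 h2] by simp
qed

lemma PASS: "g \<in> Y \<Longrightarrow> c \<in> Y \<Longrightarrow>
  feq (g # replicate k c) (replicate k c @ [inv (c [^] k) \<otimes> g \<otimes> c [^] k])"
proof (induct k arbitrary: g)
  case 0 then show ?case using YC by (simp add: fact_eq_refl)
next
  case (Suc k)
  have ac: "g \<in> carrier G" "c \<in> carrier G" using Suc YC by auto
  let ?g = "inv c \<otimes> g \<otimes> c"
  have gY: "?g \<in> Y" using conjY' ac Suc by simp
  have 1: "fact_step G Y ([] @ [g, c] @ replicate k c) ([] @ [c, ?g] @ replicate k c)"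
    by (rule fact_step.rel1) (use Suc in auto)
  have 2: "feq ([c] @ (?g # replicate k c) @ []) ([c] @ (replicate k c @ [inv (c [^] k) \<otimes> ?g \<otimes> c [^] k]) @ [])"
    by (rule app1) (rule Suc(1)[OF gY Suc(3)])
  have s: "c [^] Suc k = c \<otimes> c [^] k" using ac(2) by (rule nat_pow_Suc2)
  have e: "inv (c [^] k) \<otimes> ?g \<otimes> c [^] k = inv (c [^] Suc k) \<otimes> g \<otimes> c [^] Suc k"
    unfolding s using ac by (simp add: gs)
  have h1: "feq (g # c # replicate k c) (c # ?g # replicate k c)" using fact_eq_step[OF 1] by simp
  have h2: "feq (c # ?g # replicate k c) (c # replicate k c @ [inv (c [^] k) \<otimes> ?g \<otimes> c [^] k])" using 2 by simp
  have "feq (g # replicate (Suc k) c) (replicate (Suc k) c @ [inv (c [^] k) \<otimes> ?g \<otimes> c [^] k])"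
    using fact_eq_trans[OF h1 h2] by (simp only: replicate_Suc append_Cons)
  then show ?case unfolding e .
qed

lemma CONV1: "a \<in> Y \<Longrightarrow> g \<in> Y \<Longrightarrow>
  feq (replicate k a @ [g]) (g # replicate k (inv g \<otimes> a \<otimes> g))"
proof (induct k)
  case 0 then show ?case by (simp add: fact_eq_refl)
next
  case (Suc k)
  let ?b = "inv g \<otimes> a \<otimes> g"
  have 1: "feq ([a] @ (replicate k a @ [g]) @ []) ([a] @ (g # replicate k ?b) @ [])"
    by (rule app1) (rule Suc(1)[OF Suc(2,3)])
  have 2: "fact_step G Y ([] @ [a, g] @ replicate k ?b) ([] @ [g, ?b] @ replicate k ?b)"
    by (rule fact_step.rel1) (use Suc in auto)
  have h1: "feq (a # replicate k a @ [g]) (a # g # replicate k ?b)" using 1 by simp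
  have h2: "feq (a # g # replicate k ?b) (g # ?b # replicate k ?b)" using fact_eq_step[OF 2] by simp
  show ?case using fact_eq_trans[OF h1 h2] by simp
qed

lemma CONV: "a \<in> C \<Longrightarrow> set w \<subseteq> Y \<Longrightarrow> g \<in> set w \<Longrightarrow>
   feq (replicate p a @ w) (replicate p (inv g \<otimes> a \<otimes> g) @ w)"
proof -
  assume aC: "a \<in> C" and wY: "set w \<subseteq> Y" and gw: "g \<in> set w"
  obtain w1 w2 where w: "w = w1 @ g # w2" using split_list[OF gw] by blast
  let ?b = "inv g \<otimes> a \<otimes> g"
  have gY: "g \<in> Y" using wY gw by auto
  have bC: "?b \<in> C" using Cconj aC gY YC by auto
  have w12: "set w1 \<subseteq> Y" "set w2 \<subseteq> Y" using wY w by auto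
  have 1: "feq ([] @ (replicate p a @ w1) @ g # w2) ([] @ (w1 @ replicate p a) @ g # w2)"
    by (rule app1) (rule COMMW[OF aC w12(1)])
  have 2: "feq (w1 @ (replicate p a @ [g]) @ w2) (w1 @ (g # replicate p ?b) @ w2)"
    by (rule app1) (rule CONV1, use aC CY gY in auto)
  have 3: "feq ((w1 @ [g]) @ (replicate p ?b @ w2) @ []) ((w1 @ [g]) @ (w2 @ replicate p ?b) @ [])"
    by (rule app1) (rule COMMW[OF bC w12(2)])
  have 4: "feq (w @ replicate p ?b) (replicate p ?b @ w)"
    by (rule fact_eq_sym) (rule COMMW[OF bC wY])
  have h1: "feq (replicate p a @ w) (w1 @ replicate p a @ g # w2)" using 1 w by simp
  have h2: "feq (w1 @ replicate p a @ g # w2) (w1 @ g # replicate p ?b @ w2)" using 2 by simp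
  have h3: "feq (w1 @ g # replicate p ?b @ w2) (w @ replicate p ?b)" using 3 w by simp
  have "feq (replicate p a @ w) (w @ replicate p ?b)"
    using fact_eq_trans[OF h1 fact_eq_trans[OF h2 h3]] by simp
  then show ?thesis using fact_eq_trans 4 by blast
qed

lemma REACH: "a \<in> C \<Longrightarrow> set w \<subseteq> Y \<Longrightarrow> generate G (set w) = carrier G \<Longrightarrow> c \<in> C \<Longrightarrow>
   feq (replicate p a @ w) (replicate p c @ w)"
proof -
  assume aC: "a \<in> C" and wY: "set w \<subseteq> Y" and gen: "generate G (set w) = carrier G" and cC: "c \<in> C"
  define R where "R = {b \<in> C. feq (replicate p a @ w) (replicate p b @ w)}"
  have finR: "finite R" unfolding R_def using finC by auto
  have wc: "set w \<subseteq> carrier G" using wY Ysub by auto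
  have step: "inv g \<otimes> b \<otimes> g \<in> R" if "g \<in> set w" "b \<in> R" for g b
  proof -
    have "inv g \<otimes> b \<otimes> g \<in> C" using that Cconj wc unfolding R_def by auto
    moreover have "feq (replicate p a @ w) (replicate p (inv g \<otimes> b \<otimes> g) @ w)"
      using that CONV[of b w g] wY fact_eq_trans unfolding R_def by blast
    ultimately show ?thesis unfolding R_def by simp
  qed
  have P: "\<forall>b\<in>R. inv h \<otimes> b \<otimes> h \<in> R" if "h \<in> generate G (set w)" for h
    using that
  proof (induct rule: generate.induct)
    case one
    then show ?case unfolding R_def using Cc by auto
  next
    case (incl g)
    then show ?case using step by auto
  next
    case (inv g)
    have gc: "g \<in> carrier G" using inv wc by auto
    let ?f = "\<lambda>b. inv g \<otimes> b \<otimes> g"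
    have sub: "?f ` R \<subseteq> R" using step inv by auto
    have "inj_on ?f R"
    proof (rule inj_onI)
      fix x y assume "x \<in> R" "y \<in> R" "?f x = ?f y"
      then have xy: "x \<in> carrier G" "y \<in> carrier G" "inv g \<otimes> x \<otimes> g = inv g \<otimes> y \<otimes> g"
        unfolding R_def using Cc by auto
      have "x = g \<otimes> (inv g \<otimes> x \<otimes> g) \<otimes> inv g" using xy gc by (simp add: gs)
      also have "\<dots> = g \<otimes> (inv g \<otimes> y \<otimes> g) \<otimes> inv g" using xy by simp
      also have "\<dots> = y" using xy gc by (simp add: gs)
      finally show "x = y" .
    qed
    then have surj: "?f ` R = R" using endo_inj_surj[OF finR sub] by blast
    show ?case
    proof
      fix b assume bR: "b \<in> R"
      then obtain b' where b': "b' \<in> R" "b = inv g \<otimes> b' \<otimes> g" using surj by force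
      have b'c: "b' \<in> carrier G" using b' unfolding R_def using Cc by auto
      have "inv (inv g) \<otimes> b \<otimes> inv g = b'" using b' b'c gc by (simp add: gs)
      then show "inv (inv g) \<otimes> b \<otimes> inv g \<in> R" using b' by simp
    qed
  next
    case (eng h1 h2)
    have hc: "h1 \<in> carrier G" "h2 \<in> carrier G" using eng generate_in_carrier[OF wc] by auto
    show ?case
    proof
      fix b assume bR: "b \<in> R"
      have bc: "b \<in> carrier G" using bR unfolding R_def using Cc by auto
      have "inv (h1 \<otimes> h2) \<otimes> b \<otimes> (h1 \<otimes> h2) = inv h2 \<otimes> (inv h1 \<otimes> b \<otimes> h1) \<otimes> h2"
        using hc bc by (simp add: gs)
      then show "inv (h1 \<otimes> h2) \<otimes> b \<otimes> (h1 \<otimes> h2) \<in> R" using eng bR by simp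
    qed
  qed
  obtain g0 where g0: "g0 \<in> carrier G" "c = g0 \<otimes> y0 \<otimes> inv g0" using cC unfolding conj_class_def by auto
  obtain g1 where g1: "g1 \<in> carrier G" "a = g1 \<otimes> y0 \<otimes> inv g1" using aC unfolding conj_class_def by auto
  let ?h = "g1 \<otimes> inv g0"
  have hc: "?h \<in> carrier G" using g0 g1 by simp
  have aR: "a \<in> R" unfolding R_def using aC by (simp add: fact_eq_refl)
  have "inv ?h \<otimes> a \<otimes> ?h = c" using g0 g1 y0c by (simp add: gs)
  moreover have "inv ?h \<otimes> a \<otimes> ?h \<in> R" using P[of ?h] hc gen aR by auto
  ultimately show ?thesis unfolding R_def by auto
qed

end


lemma count_filter_in: "c \<in> A \<Longrightarrow> count_list (filter (\<lambda>y. y \<in> A) u) c = count_list u c"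
  by (induct u) auto

lemma tau_sum: "finite A \<Longrightarrow> tau A u = (\<Sum>c\<in>A. count_list u c)"
proof -
  assume fA: "finite A"
  have "tau A u = (\<Sum>c\<in>A. count_list (filter (\<lambda>y. y \<in> A) u) c)"
    unfolding tau_def by (rule sum_count_set[symmetric]) (use fA in auto)
  also have "\<dots> = (\<Sum>c\<in>A. count_list u c)" by (rule sum.cong) (auto simp: count_filter_in)
  finally show ?thesis .
qed

lemma tau_app: "tau A (a @ b) = tau A a + tau A b" unfolding tau_def by simp

lemma tau_rep: "c \<in> A \<Longrightarrow> tau A (replicate k c) = k" unfolding tau_def by simp

context cg begin

lemma MOVE: "set u \<subseteq> Y \<Longrightarrow> c \<in> Y \<Longrightarrow>
  \<exists>v. feq u (replicate (count_list u c) c @ v) \<and> set v \<subseteq> Y \<and> c \<notin> set v"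
proof (induct u)
  case Nil then show ?case by (intro exI[of _ "[]"]) (auto simp: fact_eq_refl)
next
  case (Cons x u)
  then obtain v where v: "feq u (replicate (count_list u c) c @ v)" "set v \<subseteq> Y" "c \<notin> set v" by auto
  let ?m = "count_list u c"
  have 1: "feq ([x] @ u @ []) ([x] @ (replicate ?m c @ v) @ [])" by (rule app1) (rule v(1))
  show ?case
  proof (cases "x = c")
    case True
    then show ?thesis using 1 v by auto
  next
    case False
    let ?x = "inv (c [^] ?m) \<otimes> x \<otimes> c [^] ?m"
    have xc: "x \<in> carrier G" "c \<in> carrier G" using Cons YC by auto
    have 2: "feq ([] @ (x # replicate ?m c) @ v) ([] @ (replicate ?m c @ [?x]) @ v)"
      by (rule app1) (rule PASS, use Cons in auto)
    have xY: "?x \<in> Y" using conjY' Cons xc by auto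
    have "?x \<noteq> c"
    proof
      assume e: "?x = c"
      have "x = c [^] ?m \<otimes> ?x \<otimes> inv (c [^] ?m)" using xc by (simp add: gs)
      also have "\<dots> = c [^] ?m \<otimes> c \<otimes> inv (c [^] ?m)" using e by simp
      also have "c [^] ?m \<otimes> c = c \<otimes> c [^] ?m" using xc by (metis nat_pow_Suc nat_pow_Suc2)
      also have "c \<otimes> c [^] ?m \<otimes> inv (c [^] ?m) = c" using xc by (simp add: gs)
      finally show False using False by simp
    qed
    moreover have "feq (x # u) (replicate ?m c @ ?x # v)"
      using fact_eq_trans[of G Y "x # u" "x # replicate ?m c @ v"] 1 2 by simp
    ultimately show ?thesis using False xY v by (intro exI[of _ "?x # v"]) auto
  qed
qed

lemma EXTRACT: "set u \<subseteq> Y \<Longrightarrow> tau C u \<ge> card C * p + 1 \<Longrightarrow>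
  \<exists>c\<in>C. \<exists>v. feq u (replicate p c @ v) \<and> c \<in> set v \<and> set v \<subseteq> Y \<and> tau C u = p + tau C v"
proof -
  assume uY: "set u \<subseteq> Y" and t: "tau C u \<ge> card C * p + 1"
  have "\<exists>c\<in>C. count_list u c \<ge> p + 1"
  proof (rule ccontr)
    assume "\<not> ?thesis"
    then have "\<forall>c\<in>C. count_list u c \<le> p" by auto
    then have "(\<Sum>c\<in>C. count_list u c) \<le> card C * p" using sum_bounded_above[of C "count_list u" p] by simp
    then show False using t tau_sum[OF finC, of u] by simp
  qed
  then obtain c where cC: "c \<in> C" and cnt: "count_list u c \<ge> p + 1" by blast
  have cY: "c \<in> Y" using cC CY by auto
  obtain v0 where v0: "feq u (replicate (count_list u c) c @ v0)" "set v0 \<subseteq> Y" "c \<notin> set v0"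
    using MOVE[OF uY cY] by blast
  define v where "v = replicate (count_list u c - p) c @ v0"
  have "replicate (count_list u c) c @ v0 = replicate p c @ v"
    unfolding v_def using cnt by (simp add: replicate_add[symmetric])
  then have fe: "feq u (replicate p c @ v)" using v0 by simp
  have cv: "c \<in> set v" unfolding v_def using cnt by simp
  have vY: "set v \<subseteq> Y" unfolding v_def using v0 cY by auto
  have "tau C u = tau C (replicate p c @ v)" using feq_inv[OF fe uY] by simp
  also have "\<dots> = p + tau C v" using tau_app tau_rep[OF cC] by simp
  finally show ?thesis using cC fe cv vY by blast
qed

lemma MAIN: "set s2 \<subseteq> Y \<Longrightarrow> set zs \<subseteq> C \<Longrightarrow> set u \<subseteq> Y \<Longrightarrow> generate G (set (u @ s2)) = carrier G \<Longrightarrow>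
   tau C u \<ge> length zs * p + card C * p + 1 \<Longrightarrow>
   \<exists>si. set si \<subseteq> Y \<and> generate G (set (si @ s2)) = carrier G \<and>
     feq (u @ s2) (concat (map (\<lambda>y. replicate p y) zs) @ si @ s2)"
proof (induct zs arbitrary: u)
  case Nil then show ?case by (auto simp: fact_eq_refl)
next
  case (Cons z zs)
  have "tau C u \<ge> card C * p + 1" using Cons(6) by simp
  then obtain c v where cv: "c \<in> C" "feq u (replicate p c @ v)" "c \<in> set v" "set v \<subseteq> Y"
      "tau C u = p + tau C v" using EXTRACT[OF Cons(4)] by blast
  have f1: "feq ([] @ u @ s2) ([] @ (replicate p c @ v) @ s2)" by (rule app1) (rule cv(2))
  have us: "set (u @ s2) \<subseteq> Y" using Cons by auto
  have "generate G (set (u @ s2)) = generate G (set ([] @ (replicate p c @ v) @ s2))"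
    using feq_inv[OF f1] us by simp
  moreover have "set ([] @ (replicate p c @ v) @ s2) = set (v @ s2)" using cv(3) p1 by auto
  ultimately have gv: "generate G (set (v @ s2)) = carrier G" using Cons(5) by simp
  have vs: "set (v @ s2) \<subseteq> Y" using cv(4) Cons(2) by auto
  have f2: "feq (replicate p c @ v @ s2) (replicate p z @ v @ s2)"
    by (rule REACH[OF cv(1) vs gv]) (use Cons(3) in auto)
  have "tau C v \<ge> length zs * p + card C * p + 1" using Cons(6) cv(5) by simp
  then obtain si where si: "set si \<subseteq> Y" "generate G (set (si @ s2)) = carrier G"
     "feq (v @ s2) (concat (map (\<lambda>y. replicate p y) zs) @ si @ s2)"
    using Cons(1)[OF Cons(2) _ cv(4) gv] Cons(3) by auto
  have f3: "feq (replicate p z @ (v @ s2) @ []) (replicate p z @ (concat (map (\<lambda>y. replicate p y) zs) @ si @ s2) @ [])"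
    by (rule app1) (rule si(3))
  have "feq (u @ s2) (replicate p z @ concat (map (\<lambda>y. replicate p y) zs) @ si @ s2)"
    using fact_eq_trans[OF fact_eq_trans[OF _ f2] ] f1 f3 by (metis append.assoc append_Nil append_Nil2)
  then show ?case using si by auto
qed

end

theorem corollary2p8:
  fixes G :: "('g, 'b) monoid_scheme" and Y :: "'g set"
    and s' s'' :: "'g list" and y0 :: 'g and ys :: "'g list"
  assumes "finite_C_group G Y"
    and "set s' \<subseteq> Y" and "set s'' \<subseteq> Y"
    and "full_fact G (s' @ s'')"
    and "y0 \<in> Y"
    and "distinct ys" and "set ys = conj_class G y0"
    and "tau (conj_class G y0) (s' @ s'')
           \<ge> 2 * card (conj_class G y0) * class_period G (conj_class G y0) + 1"
    and "tau (conj_class G y0) s'' = 0"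
  shows "\<exists>si. set si \<subseteq> Y \<and> full_fact G (si @ s'') \<and>
           fact_eq G Y (s' @ s'')
             (concat (map (\<lambda>y. replicate (class_period G (conj_class G y0)) y) ys) @ si @ s'')"
proof -
  from assms(1) have gr: "group G" and Ys: "Y \<subseteq> carrier G" and fY: "finite Y"
    and cj: "\<And>g y. g \<in> carrier G \<Longrightarrow> y \<in> Y \<Longrightarrow> g \<otimes>\<^bsub>G\<^esub> y \<otimes>\<^bsub>G\<^esub> inv\<^bsub>G\<^esub> g \<in> Y"
    and gw: "\<forall>g \<in> carrier G. \<exists>w. set w \<subseteq> Y \<times> UNIV \<and> word_eval G w = g"
    unfolding finite_C_group_def by blast+
  interpret c0: cg0 G Y
    by (rule cg0.intro[OF gr]) (rule cg0_axioms.intro[OF Ys fY cj gw])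
  let ?C = "conj_class G y0"
  let ?p = "class_period G ?C"
  have CY: "?C \<subseteq> Y" unfolding conj_class_def using cj assms(5) by auto
  have fC: "finite ?C" using CY fY finite_subset by auto
  have ex: "\<exists>p::nat. p \<ge> 1 \<and> (\<forall>y\<in>?C. central G (y [^]\<^bsub>G\<^esub> p))"
    using c0.period_set[OF fC CY] by blast
  have pp: "?p \<ge> 1 \<and> (\<forall>y\<in>?C. central G (y [^]\<^bsub>G\<^esub> ?p))"
    unfolding class_period_def by (rule LeastI_ex[OF ex])
  interpret c: cg G Y y0 ?p
    by (rule cg.intro[OF c0.cg0_axioms]) (rule cg_axioms.intro, use assms(5) pp in auto)
  have len: "length ys = card ?C" using distinct_card[OF assms(6)] assms(7) by simp
  have tt: "tau ?C s' \<ge> length ys * ?p + card ?C * ?p + 1"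
  proof -
    have "tau ?C (s' @ s'') = tau ?C s'" using assms(9) tau_app[of ?C s' s''] by simp
    then show ?thesis using assms(8) len by (simp add: algebra_simps)
  qed
  have gen: "generate G (set (s' @ s'')) = carrier G" using assms(4) unfolding full_fact_def .
  obtain si where si: "set si \<subseteq> Y" "generate G (set (si @ s'')) = carrier G"
     "fact_eq G Y (s' @ s'') (concat (map (\<lambda>y. replicate ?p y) ys) @ si @ s'')"
    using c.MAIN[OF assms(3) _ assms(2) gen tt] assms(7) by auto
  then show ?thesis unfolding full_fact_def by blast
qed


end
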